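(* In the aggregated model, let $\alpha\in(-1/2,0)$ and $\beta>1$, suppose $\varphi\sim\mathrm{Beta}(-\alpha,1+\alpha)$ on $[0,1]$ and $\mathrm E[\psi\mid\varphi]=(1-\varphi)^\beta$. Then for $|x|<1$, $\mathrm E\big[\frac{1}{1-x\varphi}\big]=(1-x)^{\alpha}$ and $\mathrm E\big[\frac{(1-\varphi)^\beta}{1-x\varphi}\big]=\frac{\Gamma(1+\alpha+\beta)}{\Gamma(1+\alpha)\Gamma(1+\beta)}F(1,-\alpha;1+\beta;x)$, so that the moving-average coefficients $\tilde\beta_k$ of $\bar X_t=\mathrm E[c]\sum_k\tilde\beta_k\varepsilon_{t-k}$ satisfy $$\sum_{k=0}^\infty\tilde\beta_kx^k=\frac{(1-x)^\alpha}{1-\frac{\Gamma(1+\alpha+\beta)}{\Gamma(1+\alpha)\Gamma(1+\beta)}\,x\,F(1,-\alpha;1+\beta;x)},$$ and the spectral density of $\bar X_t$ is $$f_X(\lambda)=\frac{\mathrm E[c]^2\sigma_\varepsilon^2}{2\pi}\,\frac{|1-e^{-i\lambda}|^{2\alpha}}{\big|1-\frac{\Gamma(1+\alpha+\beta)}{\Gamma(1+\alpha)\Gamma(1+\beta)}e^{-i\lambda}F(1,-\alpha;1+\beta;e^{-i\lambda})\big|^2}.$$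
   Context: $F(a,b;c;x)$ denotes the Gauss hypergeometric function. The aggregated model: $\hat X_{i,t}=\varphi_i\hat X_{i,t-1}+\psi_i\bar X_{n,t-1}+c_i\varepsilon_t+\eta_{i,t}$, $\bar X_{n,t}=\frac1n\sum_i\hat X_{i,t}$, with $(\varphi_i,\psi_i)$ i.i.d. copies of $(\varphi,\psi)$, $c_i>0$ i.i.d. copies of $c$ independent of $(\varphi,\psi)$, and independent centered Gaussian white noises $\varepsilon_t$ (variance $\sigma_\varepsilon^2$) and $\eta_{i,t}$. The limit $\bar X_t=\lim_n\bar X_{n,t}$ equals $\mathrm E[c]\sum_k\tilde\beta_k\varepsilon_{t-k}$ with $\sum_k\tilde\beta_kx^k=\mathrm E[\frac{1}{1-x\varphi}]\big(1-x\mathrm E[\frac{\psi}{1-x\varphi}]\big)^{-1}$. *)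

theory Defs
  imports "HOL-Probability.Probability"
begin

definition beta_density :: "real \<Rightarrow> real \<Rightarrow> real \<Rightarrow> real" where
  "beta_density a b t =
     (if 0 < t \<and> t < 1 then t powr (a - 1) * (1 - t) powr (b - 1) / Beta a b else 0)"

definition hyp2f1 :: "real \<Rightarrow> real \<Rightarrow> real \<Rightarrow> complex \<Rightarrow> complex" where
  "hyp2f1 a b c z =
     (\<Sum>n. complex_of_real (pochhammer a n * pochhammer b n / (pochhammer c n * fact n)) * z ^ n)"

text \<open>Autocovariance at lag h of the linear process  X_t = m * sum_k b_k eps_(t-k),
  where eps is a centered white noise with variance s2:
  Cov(X_(t+h), X_t) = m^2 * s2 * sum_k b_k b_(k+|h|).\<close>
definition ma_autocov :: "real \<Rightarrow> real \<Rightarrow> (nat \<Rightarrow> real) \<Rightarrow> int \<Rightarrow> real" where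
  "ma_autocov m s2 b h = m\<^sup>2 * s2 * (\<Sum>k. b k * b (k + nat \<bar>h\<bar>))"

definition is_spectral_density :: "(int \<Rightarrow> real) \<Rightarrow> (real \<Rightarrow> real) \<Rightarrow> bool" where
  "is_spectral_density gam f \<longleftrightarrow>
     set_integrable lborel {-pi..pi} f \<and>
     (\<forall>h::int. complex_of_real (gam h) =
        set_lebesgue_integral lborel {-pi..pi}
          (\<lambda>l. exp (\<i> * of_int h * of_real l) * complex_of_real (f l)))"

end

theory Submission
  imports Defs
begin

locale betaL =
  fixes M :: "'a measure" and phi :: "'a \<Rightarrow> real" and \<alpha> :: real
  assumes PS: "prob_space M" and a1: "-1/2 < \<alpha>" and a2: "\<alpha> < 0"
    and phim: "phi \<in> borel_measurable M"
    and dist: "distributed M lborel phi (\<lambda>t. ennreal (beta_density (-\<alpha>) (1+\<alpha>) t))"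
begin

sublocale prob_space M by (rule PS)

lemma Bpos: "Beta (-\<alpha>) (1+\<alpha>) > 0"
  using a1 a2 by (simp add: Beta_def)

lemma dens_nonneg: "0 \<le> beta_density (-\<alpha>) (1+\<alpha>) t"
  using Bpos by (simp add: beta_density_def)

lemma phi01: "AE \<omega> in M. 0 < phi \<omega> \<and> phi \<omega> < 1"
proof -
  have fm: "(\<lambda>t. ennreal (beta_density (-\<alpha>) (1+\<alpha>) t)) \<in> borel_measurable lborel"
    using distributed_borel_measurable[OF dist] .
  have "AE t in density lborel (\<lambda>t. ennreal (beta_density (-\<alpha>) (1+\<alpha>) t)). 0 < t \<and> t < 1"
    unfolding AE_density[OF fm]
    by (rule AE_I2) (auto simp: beta_density_def split: if_splits)
  then have "AE t in distr M lborel phi. 0 < t \<and> t < 1"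
    by (simp only: distributed_distr_eq_density[OF dist])
  from AE_distrD[OF _ this] show ?thesis using phim by simp
qed

definition mom :: "nat \<Rightarrow> real \<Rightarrow> real" where
  "mom k g = Beta (real k - \<alpha>) (1 + \<alpha> + g) / Beta (-\<alpha>) (1+\<alpha>)"

lemma moment:
  assumes g: "0 < 1 + \<alpha> + g"
  shows "integral\<^sup>L M (\<lambda>\<omega>. phi \<omega> ^ k * (1 - phi \<omega>) powr g) = mom k g"
proof -
  define h where "h t = t powr ((real k - \<alpha>) - 1) * (1 - t) powr ((1 + \<alpha> + g) - 1)" for t
  have "integral\<^sup>L M (\<lambda>\<omega>. phi \<omega> ^ k * (1 - phi \<omega>) powr g)
      = (\<integral>t. beta_density (-\<alpha>) (1+\<alpha>) t * (t ^ k * (1 - t) powr g) \<partial>lborel)"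
    by (rule distributed_integral[OF dist, symmetric]) (auto simp: dens_nonneg)
  also have "\<dots> = (\<integral>t. indicator {0<..<1} t *\<^sub>R h t / Beta (-\<alpha>) (1+\<alpha>) \<partial>lborel)"
  proof (rule Bochner_Integration.integral_cong[OF refl])
    fix t :: real
    show "beta_density (-\<alpha>) (1+\<alpha>) t * (t ^ k * (1 - t) powr g) = indicator {0<..<1} t *\<^sub>R h t / Beta (-\<alpha>) (1+\<alpha>)"
    proof (cases "0 < t \<and> t < 1")
      case True
      have e1: "t powr (- \<alpha> - 1) * t ^ k = t powr ((real k - \<alpha>) - 1)"
        using True by (simp add: powr_realpow[symmetric] powr_add[symmetric] algebra_simps)
      have e2: "(1 - t) powr (1 + \<alpha> - 1) * (1 - t) powr g = (1 - t) powr ((1 + \<alpha> + g) - 1)"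
        using True by (simp add: powr_add[symmetric])
      have "beta_density (-\<alpha>) (1+\<alpha>) t * (t ^ k * (1 - t) powr g)
          = (t powr (- \<alpha> - 1) * t ^ k) * ((1 - t) powr (1 + \<alpha> - 1) * (1 - t) powr g) / Beta (-\<alpha>) (1+\<alpha>)"
        using True by (simp add: beta_density_def)
      also have "\<dots> = h t / Beta (-\<alpha>) (1+\<alpha>)" unfolding e1 e2 h_def ..
      finally show ?thesis using True by simp
    qed (auto simp: beta_density_def indicator_def)
  qed
  also have "\<dots> = (LINT t:{0<..<1}|lborel. h t) / Beta (-\<alpha>) (1+\<alpha>)"
    by (simp add: set_lebesgue_integral_def)
  also have "(LINT t:{0<..<1}|lborel. h t) = integral {0<..<1} h"
  proof -
    have "set_integrable lborel {0..1} h" unfolding h_def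
      by (rule integrable_Beta) (use a2 g in auto)
    then have "set_integrable lborel {0<..<1} h"
      by (rule set_integrable_subset) auto
    then show ?thesis by (rule set_borel_integral_eq_integral)
  qed
  also have "integral {0<..<1} h = Beta (real k - \<alpha>) (1 + \<alpha> + g)"
    unfolding h_def
    by (rule integral_unique, subst has_integral_Icc_iff_Ioo[symmetric], rule has_integral_Beta_real)
       (use a2 g in auto)
  finally show ?thesis by (simp add: mom_def)
qed

declare phim[measurable]

lemma series:
  assumes g: "0 \<le> g" and x: "norm x < 1"
  shows "(\<lambda>k. x^k * complex_of_real (mom k g)) sums
     integral\<^sup>L M (\<lambda>\<omega>. complex_of_real ((1 - phi \<omega>) powr g) / (1 - x * complex_of_real (phi \<omega>)))"
proof -
  define f where "f i \<omega> = complex_of_real (phi \<omega> ^ i * (1 - phi \<omega>) powr g) * x^i" for i \<omega>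
  have fm[measurable]: "f i \<in> borel_measurable M" for i unfolding f_def by measurable
  have fb: "norm (f i \<omega>) \<le> norm x ^ i" if "0 < phi \<omega> \<and> phi \<omega> < 1" for i \<omega>
  proof -
    have a: "\<bar>phi \<omega> ^ i * (1 - phi \<omega>) powr g\<bar> \<le> 1 * 1"
      unfolding abs_mult using that g
      by (intro mult_mono) (auto simp: power_le_one powr_le1)
    have "norm (f i \<omega>) = \<bar>phi \<omega> ^ i * (1 - phi \<omega>) powr g\<bar> * norm x ^ i"
      by (simp add: f_def norm_mult norm_power abs_mult power_abs)
    also have "\<dots> \<le> norm x ^ i" using a by (intro mult_left_le_one_le) auto
    finally show ?thesis .
  qed
  have bnd: "AE \<omega> in M. norm (f i \<omega>) \<le> norm x ^ i" for i
    using phi01 by eventually_elim (rule fb)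
  have fi: "integrable M (f i)" for i
    by (rule integrable_const_bound[OF bnd[of i] fm])
  have S1: "AE \<omega> in M. summable (\<lambda>i. norm (f i \<omega>))"
    using phi01
  proof eventually_elim
    case (elim \<omega>)
    have "norm (f i \<omega>) \<le> norm x ^ i" for i using fb elim by blast
    then show ?case
      by (intro summable_comparison_test[OF _ summable_geometric[of "norm x"]]) (auto simp: x)
  qed
  have S2: "summable (\<lambda>i. \<integral>\<omega>. norm (f i \<omega>) \<partial>M)"
  proof (rule summable_comparison_test[OF _ summable_geometric[of "norm x"]])
    show "\<exists>N. \<forall>n\<ge>N. norm (\<integral>\<omega>. norm (f n \<omega>) \<partial>M) \<le> norm x ^ n"
    proof (intro exI allI impI)
      fix n :: nat
      have "(\<integral>\<omega>. norm (f n \<omega>) \<partial>M) \<le> (\<integral>\<omega>. norm x ^ n \<partial>M)"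
        by (rule integral_mono_AE') (use bnd[of n] in auto)
      then show "norm (\<integral>\<omega>. norm (f n \<omega>) \<partial>M) \<le> norm x ^ n"
        by (simp add: prob_space)
    qed
  qed (simp add: x)
  have sums: "(\<lambda>i. integral\<^sup>L M (f i)) sums (\<integral>\<omega>. (\<Sum>i. f i \<omega>) \<partial>M)"
    by (rule sums_integral[OF fi S1 S2])
  have e1: "integral\<^sup>L M (f i) = x^i * complex_of_real (mom i g)" for i
  proof -
    have "integral\<^sup>L M (f i) = integral\<^sup>L M (\<lambda>\<omega>. complex_of_real (phi \<omega> ^ i * (1 - phi \<omega>) powr g)) * x^i"
      unfolding f_def by (rule integral_mult_left_zero)
    also have "\<dots> = complex_of_real (mom i g) * x^i"
      unfolding integral_complex_of_real using moment[of g i] g a1 by simp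
    finally show ?thesis by (simp add: mult.commute)
  qed
  have e2: "(\<integral>\<omega>. (\<Sum>i. f i \<omega>) \<partial>M)
      = integral\<^sup>L M (\<lambda>\<omega>. complex_of_real ((1 - phi \<omega>) powr g) / (1 - x * complex_of_real (phi \<omega>)))"
  proof (rule integral_cong_AE)
    show "AE \<omega> in M. (\<Sum>i. f i \<omega>) = complex_of_real ((1 - phi \<omega>) powr g) / (1 - x * complex_of_real (phi \<omega>))"
      using phi01
    proof eventually_elim
      case (elim \<omega>)
      have n: "norm (x * complex_of_real (phi \<omega>)) < 1"
      proof -
        have "norm (x * complex_of_real (phi \<omega>)) = norm x * phi \<omega>" using elim by (simp add: norm_mult)
        also have "\<dots> \<le> norm x" using elim by (simp add: mult_left_le)
        finally show ?thesis using x by simp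
      qed
      have "(\<lambda>i. complex_of_real ((1 - phi \<omega>) powr g) * (x * complex_of_real (phi \<omega>)) ^ i) sums
            (complex_of_real ((1 - phi \<omega>) powr g) * (1 / (1 - x * complex_of_real (phi \<omega>))))"
        by (rule sums_mult[OF geometric_sums[OF n]])
      moreover have "(\<lambda>i. complex_of_real ((1 - phi \<omega>) powr g) * (x * complex_of_real (phi \<omega>)) ^ i) = (\<lambda>i. f i \<omega>)"
        by (auto simp: f_def power_mult_distrib mult_ac)
      ultimately show ?case by (simp add: sums_iff)
    qed
  qed measurable
  show ?thesis using sums unfolding e1 e2 .
qed

lemma mom0: "mom k 0 = pochhammer (-\<alpha>) k / fact k"
proof -
  have na: "-\<alpha> \<notin> \<int>\<^sub>\<le>\<^sub>0" using a2 by (auto elim!: nonpos_Ints_cases)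
  have p: "pochhammer (-\<alpha>) k = Gamma (-\<alpha> + real k) / Gamma (-\<alpha>)"
    by (rule pochhammer_Gamma[OF na])
  have f: "Gamma (1 + real k) = fact k" using Gamma_fact[of k] by simp
  have g1: "Gamma (real k - \<alpha> + (1 + \<alpha>)) = fact k" using f by (simp add: add.commute)
  have "Gamma (1 + \<alpha>) > 0" "Gamma (-\<alpha>) > 0" using a1 a2 by auto
  then show ?thesis unfolding mom_def Beta_def p using g1
    by (simp add: field_simps)
qed

lemma momb:
  assumes b: "0 < \<beta>"
  shows "mom k \<beta> = Gamma (1 + \<alpha> + \<beta>) / (Gamma (1 + \<alpha>) * Gamma (1 + \<beta>))
           * (pochhammer (-\<alpha>) k / pochhammer (1 + \<beta>) k)"
proof -
  have na: "-\<alpha> \<notin> \<int>\<^sub>\<le>\<^sub>0" using a2 by (auto elim!: nonpos_Ints_cases)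
  have nb: "1 + \<beta> \<notin> \<int>\<^sub>\<le>\<^sub>0" using b by (auto elim!: nonpos_Ints_cases)
  have p: "pochhammer (-\<alpha>) k = Gamma (-\<alpha> + real k) / Gamma (-\<alpha>)"
    by (rule pochhammer_Gamma[OF na])
  have q: "pochhammer (1 + \<beta>) k = Gamma (1 + \<beta> + real k) / Gamma (1 + \<beta>)"
    by (rule pochhammer_Gamma[OF nb])
  have g1: "Gamma (real k - \<alpha> + (1 + \<alpha> + \<beta>)) = Gamma (1 + \<beta> + real k)"
    by (simp add: algebra_simps)
  have pos: "Gamma (1 + \<alpha>) > 0" "Gamma (-\<alpha>) > 0" "Gamma (1 + \<beta>) > 0"
     "Gamma (1 + \<beta> + real k) > 0" "Gamma (-\<alpha> + real k) > 0" "Gamma (1 + \<alpha> + \<beta>) > 0"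
    using a1 a2 b by auto
  show ?thesis unfolding mom_def Beta_def p q g1 using pos
    by (simp add: field_simps)
qed

lemma part1:
  assumes x: "norm x < 1"
  shows "integral\<^sup>L M (\<lambda>\<omega>. 1 / (1 - x * complex_of_real (phi \<omega>))) = (1 - x) powr complex_of_real \<alpha>"
proof -
  have s1: "(\<lambda>k. x^k * complex_of_real (mom k 0)) sums
     integral\<^sup>L M (\<lambda>\<omega>. complex_of_real ((1 - phi \<omega>) powr 0) / (1 - x * complex_of_real (phi \<omega>)))"
    by (rule series) (use x in auto)
  have e: "integral\<^sup>L M (\<lambda>\<omega>. complex_of_real ((1 - phi \<omega>) powr 0) / (1 - x * complex_of_real (phi \<omega>)))
      = integral\<^sup>L M (\<lambda>\<omega>. 1 / (1 - x * complex_of_real (phi \<omega>)))"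
  proof (rule integral_cong_AE)
    show "AE \<omega> in M. complex_of_real ((1 - phi \<omega>) powr 0) / (1 - x * complex_of_real (phi \<omega>))
       = 1 / (1 - x * complex_of_real (phi \<omega>))"
      using phi01 by eventually_elim simp
  qed measurable
  have nx: "norm (-x) < 1" using x by simp
  have s2: "(\<lambda>n. (complex_of_real \<alpha> gchoose n) * (-x)^n) sums (1 + -x) powr complex_of_real \<alpha>"
    by (rule gen_binomial_complex[OF nx])
  have t: "(complex_of_real \<alpha> gchoose n) * (-x)^n = x^n * complex_of_real (mom n 0)" for n
  proof -
    have "(complex_of_real \<alpha> gchoose n) * (-x)^n
        = ((-1)^n * (-1)^n) * pochhammer (complex_of_real (-\<alpha>)) n / fact n * x^n"
      by (simp add: gbinomial_pochhammer power_minus[of x])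
    also have "(-1::complex)^n * (-1)^n = 1" by (simp flip: power_add)
    moreover have "pochhammer (complex_of_real (-\<alpha>)) n = complex_of_real (pochhammer (- \<alpha>) n)"
      by (rule pochhammer_of_real)
    ultimately show ?thesis
      by (simp add: mom0 del: of_real_minus)
  qed
  from s2 have "(\<lambda>k. x^k * complex_of_real (mom k 0)) sums (1 - x) powr complex_of_real \<alpha>"
    by (simp add: t)
  with s1 e show ?thesis by (metis sums_unique2)
qed

lemma part2:
  assumes b: "0 < \<beta>" and x: "norm x < 1"
  shows "integral\<^sup>L M (\<lambda>\<omega>. complex_of_real ((1 - phi \<omega>) powr \<beta>) / (1 - x * complex_of_real (phi \<omega>)))
     = complex_of_real (Gamma (1 + \<alpha> + \<beta>) / (Gamma (1 + \<alpha>) * Gamma (1 + \<beta>))) * hyp2f1 1 (-\<alpha>) (1 + \<beta>) x"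
proof -
  define K where "K = Gamma (1 + \<alpha> + \<beta>) / (Gamma (1 + \<alpha>) * Gamma (1 + \<beta>))"
  define E where "E = integral\<^sup>L M (\<lambda>\<omega>. complex_of_real ((1 - phi \<omega>) powr \<beta>) / (1 - x * complex_of_real (phi \<omega>)))"
  define t where "t n = complex_of_real (pochhammer 1 n * pochhammer (-\<alpha>) n / (pochhammer (1 + \<beta>) n * fact n)) * x^n" for n
  have Kpos: "K > 0" unfolding K_def using a1 a2 b by auto
  have s1: "(\<lambda>k. x^k * complex_of_real (mom k \<beta>)) sums E"
    unfolding E_def by (rule series) (use x b in auto)
  have te: "x^k * complex_of_real (mom k \<beta>) = complex_of_real K * t k" for k
  proof -
    have "pochhammer 1 k * pochhammer (-\<alpha>) k / (pochhammer (1 + \<beta>) k * fact k)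
        = pochhammer (-\<alpha>) k / pochhammer (1 + \<beta>) k"
      by (simp flip: pochhammer_fact)
    then show ?thesis unfolding t_def momb[OF b] K_def by simp
  qed
  have "(\<lambda>k. complex_of_real K * t k) sums E" using s1 by (simp add: te)
  then have "(\<lambda>k. (1 / complex_of_real K) * (complex_of_real K * t k)) sums ((1 / complex_of_real K) * E)"
    by (rule sums_mult)
  then have "t sums (E / complex_of_real K)" using Kpos by simp
  then have "hyp2f1 1 (-\<alpha>) (1 + \<beta>) x = E / complex_of_real K"
    unfolding hyp2f1_def t_def[abs_def] by (simp add: sums_iff)
  then show ?thesis using Kpos unfolding E_def K_def[symmetric] by simp
qed

lemma Hbound:
  assumes x: "norm x < 1" and p: "0 < p \<and> p < (1::real)"
  shows "norm (1 / (1 - x * complex_of_real p)) \<le> 1 / (1 - norm x)"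
proof -
  have "norm (x * complex_of_real p) \<le> norm x" using p by (simp add: norm_mult mult_left_le)
  then have "1 - norm x \<le> norm (1 - x * complex_of_real p)"
    using norm_triangle_ineq2[of 1 "x * complex_of_real p"] by simp
  moreover have "0 < 1 - norm x" using x by simp
  ultimately show ?thesis
    by (simp add: norm_divide divide_simps)
qed

lemma psi_eq:
  fixes psi :: "'a \<Rightarrow> real" and \<beta> :: real
  assumes psim[measurable]: "psi \<in> borel_measurable M" and psi_int: "integrable M psi"
    and cond: "AE \<omega> in M. real_cond_exp M (vimage_algebra (space M) phi borel) psi \<omega>
                 = (1 - phi \<omega>) powr \<beta>"
    and b: "0 \<le> \<beta>" and x: "norm x < 1"
  shows "integral\<^sup>L M (\<lambda>\<omega>. complex_of_real (psi \<omega>) / (1 - x * complex_of_real (phi \<omega>)))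
       = integral\<^sup>L M (\<lambda>\<omega>. complex_of_real ((1 - phi \<omega>) powr \<beta>) / (1 - x * complex_of_real (phi \<omega>)))"
proof -
  define F where "F = vimage_algebra (space M) phi borel"
  define C where "C = 1 / (1 - norm x)"
  define H where "H t = 1 / (1 - x * complex_of_real t)" for t
  have Hm[measurable]: "H \<in> borel_measurable borel" unfolding H_def by measurable
  have sub: "subalgebra M F"
  proof -
    have "phi \<in> space M \<rightarrow> space borel" by simp
    then have "sets F = {phi -` A \<inter> space M | A. A \<in> sets borel}"
      unfolding F_def by (rule sets_vimage_algebra2)
    also have "\<dots> \<subseteq> sets M" using phim by (auto intro: measurable_sets)
    finally show ?thesis unfolding subalgebra_def F_def by simp
  qed
  interpret FS: finite_measure_subalgebra M F
    by unfold_locales (rule sub)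
  have phiF: "phi \<in> borel_measurable F"
    unfolding F_def by (rule measurable_vimage_algebra1) simp
  have HF: "(\<lambda>\<omega>. H (phi \<omega>)) \<in> borel_measurable F"
    by (rule measurable_compose[OF phiF Hm])
  have Hb: "AE \<omega> in M. norm (H (phi \<omega>)) \<le> C"
    using phi01 by eventually_elim (unfold H_def C_def, rule Hbound[OF x])
  have key: "integral\<^sup>L M (\<lambda>\<omega>. q (H (phi \<omega>)) * psi \<omega>) = integral\<^sup>L M (\<lambda>\<omega>. q (H (phi \<omega>)) * (1 - phi \<omega>) powr \<beta>)"
    if q: "bounded_linear q" "\<And>z. norm (q z) \<le> norm z" for q :: "complex \<Rightarrow> real"
  proof -
    have qm[measurable]: "q \<in> borel_measurable borel"
      using q(1) by (intro borel_measurable_continuous_onI linear_continuous_on)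
    have qF: "(\<lambda>\<omega>. q (H (phi \<omega>))) \<in> borel_measurable F"
      by (rule measurable_compose[OF HF qm])
    have int: "integrable M (\<lambda>\<omega>. q (H (phi \<omega>)) * psi \<omega>)"
    proof (rule Bochner_Integration.integrable_bound[OF integrable_mult_right[OF psi_int, of C]])
      show "AE \<omega> in M. norm (q (H (phi \<omega>)) * psi \<omega>) \<le> norm (C * psi \<omega>)"
        using Hb
      proof eventually_elim
        case (elim \<omega>)
        have "norm (q (H (phi \<omega>))) \<le> C" using q(2)[of "H (phi \<omega>)"] elim by linarith
        moreover have "0 \<le> C" using x by (simp add: C_def)
        ultimately show ?case
          by (simp add: abs_mult mult_right_mono)
      qed
    qed measurable
    have "integral\<^sup>L M (\<lambda>\<omega>. q (H (phi \<omega>)) * psi \<omega>)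
        = integral\<^sup>L M (\<lambda>\<omega>. q (H (phi \<omega>)) * real_cond_exp M F psi \<omega>)"
      by (rule FS.real_cond_exp_intg(2)[OF int qF psim, symmetric])
    also have "\<dots> = integral\<^sup>L M (\<lambda>\<omega>. q (H (phi \<omega>)) * (1 - phi \<omega>) powr \<beta>)"
      by (rule integral_cong_AE) (use cond in \<open>auto simp: F_def elim!: eventually_mono\<close>)
    finally show ?thesis .
  qed
  have intL: "integrable M (\<lambda>\<omega>. complex_of_real (psi \<omega>) * H (phi \<omega>))"
  proof (rule Bochner_Integration.integrable_bound[OF integrable_mult_right[OF psi_int, of C]])
    show "AE \<omega> in M. norm (complex_of_real (psi \<omega>) * H (phi \<omega>)) \<le> norm (C * psi \<omega>)"
      using Hb
    proof eventually_elim
      case (elim \<omega>)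
      moreover have "0 \<le> C" using x by (simp add: C_def)
      ultimately show ?case
        by (simp add: abs_mult norm_mult) (metis abs_ge_zero mult.commute mult_right_mono)
    qed
  qed measurable
  have intR: "integrable M (\<lambda>\<omega>. complex_of_real ((1 - phi \<omega>) powr \<beta>) * H (phi \<omega>))"
  proof (rule integrable_const_bound[where B=C])
    show "AE \<omega> in M. norm (complex_of_real ((1 - phi \<omega>) powr \<beta>) * H (phi \<omega>)) \<le> C"
      using Hb phi01
    proof eventually_elim
      case (elim \<omega>)
      have "\<bar>(1 - phi \<omega>) powr \<beta>\<bar> \<le> 1" using elim b by (simp add: powr_le1)
      then have "\<bar>(1 - phi \<omega>) powr \<beta>\<bar> * norm (H (phi \<omega>)) \<le> 1 * C"
        using elim by (intro mult_mono) auto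
      then show ?case by (simp add: norm_mult)
    qed
  qed measurable
  have "integral\<^sup>L M (\<lambda>\<omega>. complex_of_real (psi \<omega>) * H (phi \<omega>))
      = integral\<^sup>L M (\<lambda>\<omega>. complex_of_real ((1 - phi \<omega>) powr \<beta>) * H (phi \<omega>))"
  proof (rule complex_eqI)
    have "Re (integral\<^sup>L M (\<lambda>\<omega>. complex_of_real (psi \<omega>) * H (phi \<omega>)))
        = integral\<^sup>L M (\<lambda>\<omega>. Re (H (phi \<omega>)) * psi \<omega>)"
      using integral_Re[OF intL] by (simp add: mult.commute)
    also have "\<dots> = integral\<^sup>L M (\<lambda>\<omega>. Re (H (phi \<omega>)) * (1 - phi \<omega>) powr \<beta>)"
      by (rule key) (auto intro: bounded_linear_Re abs_Re_le_cmod)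
    also have "\<dots> = Re (integral\<^sup>L M (\<lambda>\<omega>. complex_of_real ((1 - phi \<omega>) powr \<beta>) * H (phi \<omega>)))"
      using integral_Re[OF intR] by (simp add: mult.commute)
    finally show "Re (integral\<^sup>L M (\<lambda>\<omega>. complex_of_real (psi \<omega>) * H (phi \<omega>))) = Re (integral\<^sup>L M (\<lambda>\<omega>. complex_of_real ((1 - phi \<omega>) powr \<beta>) * H (phi \<omega>)))" .
    have "Im (integral\<^sup>L M (\<lambda>\<omega>. complex_of_real (psi \<omega>) * H (phi \<omega>)))
        = integral\<^sup>L M (\<lambda>\<omega>. Im (H (phi \<omega>)) * psi \<omega>)"
      using integral_Im[OF intL] by (simp add: mult.commute)
    also have "\<dots> = integral\<^sup>L M (\<lambda>\<omega>. Im (H (phi \<omega>)) * (1 - phi \<omega>) powr \<beta>)"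
      by (rule key) (auto intro: bounded_linear_Im abs_Im_le_cmod)
    also have "\<dots> = Im (integral\<^sup>L M (\<lambda>\<omega>. complex_of_real ((1 - phi \<omega>) powr \<beta>) * H (phi \<omega>)))"
      using integral_Im[OF intR] by (simp add: mult.commute)
    finally show "Im (integral\<^sup>L M (\<lambda>\<omega>. complex_of_real (psi \<omega>) * H (phi \<omega>))) = Im (integral\<^sup>L M (\<lambda>\<omega>. complex_of_real ((1 - phi \<omega>) powr \<beta>) * H (phi \<omega>)))" .
  qed
  then show ?thesis by (simp add: H_def)
qed

lemma mom_nonneg: assumes "0 < 1 + \<alpha> + g" shows "0 \<le> mom k g"
  unfolding mom_def Beta_def using assms a1 a2 by (auto intro!: divide_nonneg_nonneg mult_nonneg_nonneg less_imp_le)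

lemma momsum:
  assumes b: "1 < \<beta>"
  shows "summable (\<lambda>k. mom k \<beta>)" "(\<Sum>k. mom k \<beta>) < 1"
proof -
  define S where "S = integral\<^sup>L M (\<lambda>\<omega>. (1 - phi \<omega>) powr (\<beta> - 1))"
  have Sm: "S = mom 0 (\<beta> - 1)"
    unfolding S_def using moment[of "\<beta> - 1" 0] a1 b by simp
  have int1: "integrable M (\<lambda>\<omega>. (1 - phi \<omega>) powr (\<beta> - 1))"
  proof (rule integrable_const_bound[where B=1])
    show "AE \<omega> in M. norm ((1 - phi \<omega>) powr (\<beta> - 1)) \<le> 1"
      using phi01 by eventually_elim (use b in \<open>auto intro!: powr_le1\<close>)
  qed measurable
  have intk: "integrable M (\<lambda>\<omega>. phi \<omega> ^ k * (1 - phi \<omega>) powr \<beta>)" for k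
  proof (rule integrable_const_bound[where B=1])
    show "AE \<omega> in M. norm (phi \<omega> ^ k * (1 - phi \<omega>) powr \<beta>) \<le> 1"
      using phi01
    proof eventually_elim
      case (elim \<omega>)
      have "\<bar>phi \<omega> ^ k\<bar> * \<bar>(1 - phi \<omega>) powr \<beta>\<bar> \<le> 1 * 1"
        using elim b by (intro mult_mono) (auto simp: power_le_one powr_le1)
      then show ?case by (simp add: abs_mult)
    qed
  qed measurable
  have part: "(\<Sum>k<n. mom k \<beta>) \<le> S" for n
  proof -
    have "(\<Sum>k<n. mom k \<beta>) = (\<Sum>k<n. integral\<^sup>L M (\<lambda>\<omega>. phi \<omega> ^ k * (1 - phi \<omega>) powr \<beta>))"
      using moment[of \<beta>] a1 b by simp
    also have "\<dots> = integral\<^sup>L M (\<lambda>\<omega>. \<Sum>k<n. phi \<omega> ^ k * (1 - phi \<omega>) powr \<beta>)"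
      by (rule Bochner_Integration.integral_sum[symmetric]) (rule intk)
    also have "\<dots> \<le> S" unfolding S_def
    proof (rule integral_mono_AE[OF _ int1])
      show "integrable M (\<lambda>\<omega>. \<Sum>k<n. phi \<omega> ^ k * (1 - phi \<omega>) powr \<beta>)"
        by (rule Bochner_Integration.integrable_sum) (rule intk)
      show "AE \<omega> in M. (\<Sum>k<n. phi \<omega> ^ k * (1 - phi \<omega>) powr \<beta>) \<le> (1 - phi \<omega>) powr (\<beta> - 1)"
        using phi01
      proof eventually_elim
        case (elim \<omega>)
        define p where "p = phi \<omega>"
        have p: "0 < p" "p < 1" using elim by (auto simp: p_def)
        have "(\<Sum>k<n. p ^ k * (1 - p) powr \<beta>) = (\<Sum>k<n. p ^ k) * (1 - p) powr \<beta>"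
          by (simp add: sum_distrib_right)
        also have "(\<Sum>k<n. p ^ k) = (1 - p ^ n) / (1 - p)"
          using p by (simp add: sum_gp_strict)
        also have "(1 - p ^ n) / (1 - p) * (1 - p) powr \<beta> \<le> 1 / (1 - p) * (1 - p) powr \<beta>"
          using p by (intro mult_right_mono divide_right_mono) auto
        also have "1 / (1 - p) * (1 - p) powr \<beta> = (1 - p) powr (\<beta> - 1)"
          using p by (simp add: powr_diff)
        finally show ?case by (simp add: p_def)
      qed
    qed
    finally show ?thesis .
  qed
  have nn: "0 \<le> mom k \<beta>" for k by (rule mom_nonneg) (use a1 b in auto)
  show sm: "summable (\<lambda>k. mom k \<beta>)"
    by (rule summableI_nonneg_bounded[OF nn part])
  have "S < 1"
  proof -
    define u where "u \<omega> = 1 - (1 - phi \<omega>) powr (\<beta> - 1)" for \<omega>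
    have ui: "integrable M u" unfolding u_def using int1 by simp
    have upos: "AE \<omega> in M. 0 < u \<omega>"
      using phi01
    proof eventually_elim
      case (elim \<omega>)
      have "(1 - phi \<omega>) powr (\<beta> - 1) < 1 powr (\<beta> - 1)"
        using elim b by (intro powr_less_mono2) auto
      then show ?case by (simp add: u_def)
    qed
    have "integral\<^sup>L M u \<noteq> 0"
    proof
      assume "integral\<^sup>L M u = 0"
      moreover have "AE \<omega> in M. 0 \<le> u \<omega>" using upos by (auto elim: eventually_mono)
      ultimately have "AE \<omega> in M. u \<omega> = 0"
        using integral_nonneg_eq_0_iff_AE[OF ui] by blast
      with upos have "AE \<omega> in M. False" by eventually_elim simp
      then show False by (simp add: AE_False)
    qed
    moreover have "0 \<le> integral\<^sup>L M u"
      by (rule integral_nonneg_AE) (use upos in \<open>auto elim: eventually_mono\<close>)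
    moreover have "integral\<^sup>L M u = 1 - S"
      unfolding u_def S_def using int1 by (simp add: prob_space)
    ultimately show ?thesis by simp
  qed
  moreover have "(\<Sum>k. mom k \<beta>) \<le> S" by (rule suminf_le_const[OF sm part])
  ultimately show "(\<Sum>k. mom k \<beta>) < 1" by simp
qed

end

lemma int_exp:
  "(LINT l:{-pi..pi}|lborel. exp (\<i> * of_int m * complex_of_real l)) = (if m = 0 then 2 * pi else 0)"
proof -
  define f where "f l = exp (\<i> * of_int m * complex_of_real l)" for l
  have cont: "continuous_on {-pi..pi} f" unfolding f_def by (intro continuous_intros)
  have si: "set_integrable lborel {-pi..pi} f"
    unfolding set_integrable_def by (rule borel_integrable_compact[OF compact_Icc cont])
  have eq: "(LINT l:{-pi..pi}|lborel. f l) = integral {-pi..pi} f"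
    by (rule set_borel_integral_eq_integral(2)[OF si])
  show ?thesis
  proof (cases "m = 0")
    case True
    then have "f = (\<lambda>l. 1)" by (auto simp: f_def fun_eq_iff)
    then have "integral {-pi..pi} f = 2 * pi" by (simp add: content_real scaleR_conv_of_real)
    then show ?thesis using eq True by (simp add: f_def)
  next
    case False
    define g where "g w = exp (\<i> * of_int m * w) / (\<i> * of_int m)" for w :: complex
    have gd: "(g has_field_derivative exp (\<i> * of_int m * w)) (at w)" for w
      unfolding g_def using False by (auto intro!: derivative_eq_intros)
    have "(f has_integral (g (of_real pi) - g (of_real (-pi)))) {-pi..pi}"
    proof (rule fundamental_theorem_of_calculus)
      fix x assume "x \<in> {-pi..pi}"
      show "((\<lambda>x. g (of_real x)) has_vector_derivative f x) (at x within {-pi..pi})"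
        unfolding f_def by (rule has_vector_derivative_real_field[OF gd])
    qed simp
    moreover have "g (of_real pi) = g (of_real (-pi))"
    proof -
      have "exp (\<i> * of_int m * complex_of_real pi)
          = exp (\<i> * of_int m * complex_of_real (-pi)) * exp ((2 * of_int m * pi) * \<i>)"
      proof -
        have "\<i> * of_int m * complex_of_real (-pi) + (2 * of_int m * pi) * \<i> = \<i> * of_int m * complex_of_real pi"
          by (simp add: algebra_simps)
        then show ?thesis by (metis exp_add)
      qed
      also have "exp ((2 * of_int m * pi) * \<i>) = 1"
        by (rule exp_integer_2pi) simp
      finally show ?thesis by (simp add: g_def)
    qed
    ultimately have "integral {-pi..pi} f = 0" by (simp add: integral_unique)
    then show ?thesis using eq False by (simp add: f_def)
  qed
qed

lemma int_suminf:
  fixes g :: "nat \<Rightarrow> real \<Rightarrow> complex" and w :: "nat \<Rightarrow> real"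
  assumes meas[measurable]: "\<And>k. g k \<in> borel_measurable borel"
    and bnd: "\<And>k l. norm (g k l) \<le> w k" and sw: "summable w"
  shows "(LINT l:{-pi..pi}|lborel. (\<Sum>k. g k l)) = (\<Sum>k. LINT l:{-pi..pi}|lborel. g k l)"
proof -
  define f where "f k l = indicator {-pi..pi} l *\<^sub>R g k l" for k l
  have fm[measurable]: "f k \<in> borel_measurable lborel" for k unfolding f_def by measurable
  have w0: "0 \<le> w k" for k using bnd[of k 0] norm_ge_zero order_trans by blast
  have wi: "integrable lborel (\<lambda>l. indicator {-pi..pi} l *\<^sub>R w k)" for k
    by (rule borel_integrable_compact[OF compact_Icc continuous_on_const])
  have fb: "norm (f k l) \<le> norm (indicator {-pi..pi} l *\<^sub>R w k)" for k l
    using bnd[of k l] w0[of k] by (auto simp: f_def indicator_def)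
  have fi: "integrable lborel (f k)" for k
    by (rule Bochner_Integration.integrable_bound[OF wi[of k] fm]) (rule AE_I2, rule fb)
  have S1: "AE l in lborel. summable (\<lambda>k. norm (f k l))"
  proof (rule AE_I2)
    fix l
    have "norm (f k l) \<le> w k" for k using bnd[of k l] w0[of k] by (auto simp: f_def indicator_def)
    then show "summable (\<lambda>k. norm (f k l))"
      by (intro summable_comparison_test[OF _ sw]) auto
  qed
  have S2: "summable (\<lambda>k. \<integral>l. norm (f k l) \<partial>lborel)"
  proof (rule summable_comparison_test[OF _ summable_mult[OF sw, of "2 * pi"]])
    show "\<exists>N. \<forall>n\<ge>N. norm (\<integral>l. norm (f n l) \<partial>lborel) \<le> 2 * pi * w n"
    proof (intro exI allI impI)
      fix n :: nat
      have "(\<integral>l. norm (f n l) \<partial>lborel) \<le> (\<integral>l. indicator {-pi..pi} l *\<^sub>R w n \<partial>lborel)"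
        by (rule integral_mono[OF integrable_norm[OF fi] wi]) (use fb w0 in \<open>auto simp: indicator_def\<close>)
      also have "\<dots> = 2 * pi * w n" by (simp add: mult.commute)
      finally show "norm (\<integral>l. norm (f n l) \<partial>lborel) \<le> 2 * pi * w n" by simp
    qed
  qed
  have "(LINT l:{-pi..pi}|lborel. (\<Sum>k. g k l)) = (\<integral>l. (\<Sum>k. f k l) \<partial>lborel)"
    unfolding set_lebesgue_integral_def f_def
    by (rule Bochner_Integration.integral_cong) (auto simp: indicator_def)
  also have "\<dots> = (\<Sum>k. integral\<^sup>L lborel (f k))"
    by (rule integral_suminf[OF fi S1 S2])
  finally show ?thesis unfolding set_lebesgue_integral_def f_def .
qed

lemma parseval:
  fixes c :: "nat \<Rightarrow> real" and h :: int
  assumes sc: "summable (\<lambda>k. \<bar>c k\<bar>)"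
  shows "(LINT l:{-pi..pi}|lborel. exp (\<i> * of_int h * complex_of_real l)
            * complex_of_real ((norm (\<Sum>k. complex_of_real (c k) * exp (- \<i> * complex_of_real l) ^ k))\<^sup>2))
         = complex_of_real (2 * pi * (\<Sum>k. c k * c (k + nat \<bar>h\<bar>)))"
proof -
  define E where "E m l = exp (\<i> * of_int m * complex_of_real l)" for m :: int and l :: real
  define A where "A = (\<Sum>k. \<bar>c k\<bar>)"
  define S where "S l = (\<Sum>k. complex_of_real (c k) * exp (- \<i> * complex_of_real l) ^ k)" for l
  define T where "T l = (\<Sum>k. complex_of_real (c k) * E (int k) l)" for l
  have Em[measurable]: "E m \<in> borel_measurable borel" for m
    unfolding E_def by (intro borel_measurable_continuous_onI continuous_intros)
  have nE: "norm (E m l) = 1" for m l unfolding E_def by simp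
  have EE: "E m l * E n l = E (m + n) l" for m n l
    unfolding E_def exp_add[symmetric] by (rule arg_cong[where f=exp]) (simp add: algebra_simps)
  have epow: "exp (- \<i> * complex_of_real l) ^ k = E (- int k) l" for l k
    unfolding E_def exp_of_nat_mult[symmetric] by (rule arg_cong[where f=exp]) (simp add: algebra_simps)
  have sT: "(\<lambda>k. complex_of_real (c k) * E (int k) l) sums T l" for l
  proof -
    have "summable (\<lambda>k. norm (complex_of_real (c k) * E (int k) l))"
      using sc by (simp add: norm_mult nE)
    then show ?thesis unfolding T_def by (rule summable_sums[OF summable_norm_cancel])
  qed
  have sS: "(\<lambda>k. complex_of_real (c k) * E (- int k) l) sums S l" for l
  proof -
    have "summable (\<lambda>k. norm (complex_of_real (c k) * E (- int k) l))"
      using sc by (simp add: norm_mult nE)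
    then show ?thesis unfolding S_def epow by (rule summable_sums[OF summable_norm_cancel])
  qed
  have cST: "cnj (S l) = T l" for l
  proof -
    have "(\<lambda>k. cnj (complex_of_real (c k) * E (- int k) l)) sums cnj (S l)"
      using sS by (simp only: sums_cnj)
    moreover have cE: "cnj (E m l) = E (- m) l" for m unfolding E_def by (simp add: exp_cnj)
    ultimately have "(\<lambda>k. complex_of_real (c k) * E (int k) l) sums cnj (S l)" by (simp add: cE)
    then show ?thesis using sT by (rule sums_unique2)
  qed
  have nT: "norm (T l) \<le> A" for l
  proof -
    have "norm (T l) \<le> (\<Sum>k. norm (complex_of_real (c k) * E (int k) l))"
      unfolding T_def by (rule summable_norm) (use sc in \<open>simp add: norm_mult nE\<close>)
    then show ?thesis by (simp add: A_def norm_mult nE)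
  qed
  have Tm[measurable]: "T \<in> borel_measurable borel"
    unfolding T_def by (intro borel_measurable_suminf borel_measurable_times borel_measurable_const Em)
  have A0: "0 \<le> A" unfolding A_def using sc by (simp add: suminf_nonneg)
  have inner: "(LINT l:{-pi..pi}|lborel. complex_of_real (c j) * E (h - int j) l * T l)
      = (if int j \<ge> h then complex_of_real (2 * pi * c j * c (nat (int j - h))) else 0)" for j
  proof -
    define g where "g k l = complex_of_real (c j * c k) * E (h - int j + int k) l" for k l
    have gs: "(\<lambda>k. g k l) sums (complex_of_real (c j) * E (h - int j) l * T l)" for l
    proof -
      have "(\<lambda>k. complex_of_real (c j) * E (h - int j) l * (complex_of_real (c k) * E (int k) l))
          sums (complex_of_real (c j) * E (h - int j) l * T l)"
        by (rule sums_mult[OF sT])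
      moreover have "complex_of_real (c j) * E (h - int j) l * (complex_of_real (c k) * E (int k) l) = g k l" for k
        unfolding g_def by (simp add: EE[symmetric] mult_ac)
      ultimately show ?thesis by simp
    qed
    have "(LINT l:{-pi..pi}|lborel. complex_of_real (c j) * E (h - int j) l * T l)
        = (LINT l:{-pi..pi}|lborel. (\<Sum>k. g k l))"
      using gs by (simp add: sums_iff)
    also have "\<dots> = (\<Sum>k. LINT l:{-pi..pi}|lborel. g k l)"
    proof (rule int_suminf)
      show "g k \<in> borel_measurable borel" for k unfolding g_def by measurable
      show "norm (g k l) \<le> \<bar>c j\<bar> * \<bar>c k\<bar>" for k l unfolding g_def by (simp add: norm_mult nE abs_mult)
      show "summable (\<lambda>k. \<bar>c j\<bar> * \<bar>c k\<bar>)" by (rule summable_mult[OF sc])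
    qed
    also have "(\<lambda>k. LINT l:{-pi..pi}|lborel. g k l)
        = (\<lambda>k. complex_of_real (c j * c k) * (if h - int j + int k = 0 then 2 * pi else 0))"
    proof
      fix k
      have "(LINT l:{-pi..pi}|lborel. g k l)
          = complex_of_real (c j * c k) * (LINT l:{-pi..pi}|lborel. E (h - int j + int k) l)"
        unfolding g_def by (simp add: set_lebesgue_integral_def)
      also have "\<dots> = complex_of_real (c j * c k) * (if h - int j + int k = 0 then 2 * pi else 0)"
        unfolding E_def int_exp ..
      finally show "(LINT l:{-pi..pi}|lborel. g k l) = complex_of_real (c j * c k) * (if h - int j + int k = 0 then 2 * pi else 0)" .
    qed
    also have "(\<Sum>k. complex_of_real (c j * c k) * (if h - int j + int k = 0 then 2 * pi else 0))
        = (if int j \<ge> h then complex_of_real (2 * pi * c j * c (nat (int j - h))) else 0)"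
    proof (cases "int j \<ge> h")
      case True
      have "(\<lambda>k. complex_of_real (c j * c k) * (if h - int j + int k = 0 then 2 * pi else 0))
          = (\<lambda>k. if k = nat (int j - h) then complex_of_real (2 * pi * c j * c k) else 0)"
        using True by (auto simp: fun_eq_iff)
      then show ?thesis using True sums_single[of "nat (int j - h)" "\<lambda>k. complex_of_real (2 * pi * c j * c k)"]
        by (simp add: sums_iff)
    next
      case False
      then have "(\<lambda>k. complex_of_real (c j * c k) * (if h - int j + int k = 0 then 2 * pi else 0)) = (\<lambda>k. 0)"
        by (auto simp: fun_eq_iff)
      then show ?thesis using False by simp
    qed
    finally show ?thesis .
  qed
  define g where "g j l = complex_of_real (c j) * E (h - int j) l * T l" for j l
  have gs: "(\<lambda>j. g j l) sums (E h l * complex_of_real ((norm (S l))\<^sup>2))" for l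
  proof -
    have "(\<lambda>j. complex_of_real (c j) * E (- int j) l * (E h l * T l)) sums (S l * (E h l * T l))"
      by (rule sums_mult2[OF sS])
    moreover have "complex_of_real (c j) * E (- int j) l * (E h l * T l) = g j l" for j
      unfolding g_def by (simp add: mult_ac EE add.commute)
    moreover have "S l * (E h l * T l) = E h l * complex_of_real ((norm (S l))\<^sup>2)"
    proof -
      have "complex_of_real ((norm (S l))\<^sup>2) = S l * T l" by (simp only: complex_norm_square cST)
      then show ?thesis by (simp add: mult_ac)
    qed
    ultimately show ?thesis by simp
  qed
  have "(LINT l:{-pi..pi}|lborel. E h l * complex_of_real ((norm (S l))\<^sup>2))
      = (LINT l:{-pi..pi}|lborel. (\<Sum>j. g j l))"
    using gs by (simp add: sums_iff)
  also have "\<dots> = (\<Sum>j. LINT l:{-pi..pi}|lborel. g j l)"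
  proof (rule int_suminf)
    show "g k \<in> borel_measurable borel" for k unfolding g_def by measurable
    show "norm (g k l) \<le> \<bar>c k\<bar> * A" for k l unfolding g_def using nT[of l]
      by (simp add: norm_mult nE mult_left_mono)
    show "summable (\<lambda>k. \<bar>c k\<bar> * A)" by (rule summable_mult2[OF sc])
  qed
  also have "(\<lambda>j. LINT l:{-pi..pi}|lborel. g j l)
      = (\<lambda>j. if int j \<ge> h then complex_of_real (2 * pi * c j * c (nat (int j - h))) else 0)"
    unfolding g_def inner ..
  also have "(\<Sum>j. if int j \<ge> h then complex_of_real (2 * pi * c j * c (nat (int j - h))) else 0)
      = complex_of_real (2 * pi * (\<Sum>k. c k * c (k + nat \<bar>h\<bar>)))"
  proof -
    have sm: "summable (\<lambda>k. c k * c (k + nat \<bar>h\<bar>))"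
    proof (rule summable_comparison_test[OF _ summable_mult2[OF sc, of A]])
      have "\<bar>c (k + nat \<bar>h\<bar>)\<bar> \<le> A" for k
        unfolding A_def using sum_le_suminf[OF sc, of "{k + nat \<bar>h\<bar>}"] by simp
      then show "\<exists>N. \<forall>n\<ge>N. norm (c n * c (n + nat \<bar>h\<bar>)) \<le> \<bar>c n\<bar> * A"
        by (auto simp: abs_mult intro!: mult_left_mono)
    qed
    then have s0: "(\<lambda>k. complex_of_real (2 * pi * (c k * c (k + nat \<bar>h\<bar>)))) sums complex_of_real (2 * pi * (\<Sum>k. c k * c (k + nat \<bar>h\<bar>)))"
      by (intro sums_of_real sums_mult summable_sums)
    show ?thesis
    proof (cases "h \<ge> 0")
      case True
      define n where "n = nat h"
      have hn: "h = int n" using True by (simp add: n_def)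
      let ?D = "\<lambda>j. if int j \<ge> h then complex_of_real (2 * pi * c j * c (nat (int j - h))) else 0"
      have "(\<lambda>i. ?D (i + n)) = (\<lambda>k. complex_of_real (2 * pi * (c k * c (k + nat \<bar>h\<bar>))))"
        by (auto simp: fun_eq_iff hn mult_ac)
      with s0 have "(\<lambda>i. ?D (i + n)) sums complex_of_real (2 * pi * (\<Sum>k. c k * c (k + nat \<bar>h\<bar>)))" by simp
      then have "?D sums complex_of_real (2 * pi * (\<Sum>k. c k * c (k + nat \<bar>h\<bar>)))"
        by (subst (asm) sums_zero_iff_shift) (auto simp: hn)
      then show ?thesis by (simp add: sums_iff)
    next
      case False
      have "(\<lambda>j. if int j \<ge> h then complex_of_real (2 * pi * c j * c (nat (int j - h))) else 0)
          = (\<lambda>k. complex_of_real (2 * pi * (c k * c (k + nat \<bar>h\<bar>))))"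
      proof -
        have "nat (int x - h) = x + nat \<bar>h\<bar>" for x using False by simp
        then show ?thesis using False by (auto simp: fun_eq_iff mult_ac)
      qed
      with s0 show ?thesis by (simp add: sums_iff)
    qed
  qed
  finally show ?thesis unfolding E_def S_def .
qed

lemma cos_lb:
  fixes x :: real
  assumes "\<bar>x\<bar> \<le> pi"
  shows "x\<^sup>2 / 12 \<le> 1 - cos x"
proof -
  have main: "y\<^sup>2 / 12 \<le> 1 - cos y" if y: "0 < y" "y \<le> pi" for y :: real
  proof -
    obtain t where t: "cos y = (\<Sum>m<4. cos_coeff m * y ^ m) + (cos (t + 1/2 * real 4 * pi) / fact 4) * y ^ 4"
      using Maclaurin_cos_expansion2[of y 4] y by auto
    have s: "(\<Sum>m<4. cos_coeff m * y ^ m) = 1 - y\<^sup>2 / 2"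
    proof -
      have "(\<Sum>m<4. cos_coeff m * y ^ m) = cos_coeff 0 * y^0 + cos_coeff 1 * y^1 + cos_coeff 2 * y^2 + cos_coeff 3 * y^3"
        by (simp add: eval_nat_numeral)
      moreover have "cos_coeff 0 = 1" "cos_coeff 1 = 0" "cos_coeff 2 = -1/2" "cos_coeff 3 = 0"
        by (simp_all add: cos_coeff_def)
      ultimately show ?thesis by simp
    qed
    have "cos (t + 1/2 * real 4 * pi) / fact 4 * y ^ 4 \<le> 1 / 24 * y ^ 4"
      by (intro mult_right_mono) (auto simp: fact_numeral)
    then have c: "cos y \<le> 1 - y\<^sup>2 / 2 + y ^ 4 / 24" using t s by simp
    have p2: "y\<^sup>2 \<le> 10"
    proof -
      have "y\<^sup>2 \<le> pi\<^sup>2" using y by (intro power_mono) auto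
      also have "pi\<^sup>2 \<le> 3.15\<^sup>2" using pi_approx by (intro power_mono) auto
      also have "(3.15::real)\<^sup>2 \<le> 10" by (simp add: power2_eq_square)
      finally show ?thesis .
    qed
    have "y ^ 4 / 24 \<le> y\<^sup>2 * 10 / 24"
    proof -
      have "y ^ 4 = y\<^sup>2 * y\<^sup>2" by (simp add: power2_eq_square eval_nat_numeral)
      also have "\<dots> \<le> y\<^sup>2 * 10" using p2 by (intro mult_left_mono) auto
      finally show ?thesis by simp
    qed
    with c show ?thesis by simp
  qed
  show ?thesis
  proof (cases "x = 0")
    case False
    show ?thesis
    proof (cases "x > 0")
      case True then show ?thesis using main[of x] assms by simp
    next
      case False
      with \<open>x \<noteq> 0\<close> have "0 < -x" by simp
      then show ?thesis using main[of "-x"] assms by simp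
    qed
  qed simp
qed

lemma norm_lb:
  fixes r l :: real
  assumes r: "1/2 \<le> r" "r \<le> 1" and l: "\<bar>l\<bar> \<le> pi"
  shows "l\<^sup>2 / 12 \<le> (norm (1 - complex_of_real r * exp (- \<i> * complex_of_real l)))\<^sup>2"
proof -
  have "(norm (1 - complex_of_real r * exp (- \<i> * complex_of_real l)))\<^sup>2 = (1 - r * cos l)\<^sup>2 + (r * sin l)\<^sup>2"
    by (simp add: cmod_power2 Re_exp Im_exp)
  also have "\<dots> = 1 - 2 * r * cos l + r\<^sup>2 * ((sin l)\<^sup>2 + (cos l)\<^sup>2)"
    by algebra
  also have "\<dots> = 1 - 2 * r * cos l + r\<^sup>2" by (simp only: sin_cos_squared_add mult_1_right)
  finally have e: "(norm (1 - complex_of_real r * exp (- \<i> * complex_of_real l)))\<^sup>2 = 1 - 2 * r * cos l + r\<^sup>2" .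
  have "1 - cos l \<le> 1 - 2 * r * cos l + r\<^sup>2"
  proof -
    have "(2 * r - 1) * cos l \<le> (2 * r - 1) * 1" using r by (intro mult_left_mono) auto
    moreover have "0 \<le> (r - 1)\<^sup>2" by simp
    ultimately show ?thesis by (simp add: power2_eq_square algebra_simps)
  qed
  with cos_lb[OF l] e show ?thesis by simp
qed

lemma powr_abs_int:
  fixes p :: real
  assumes p: "-1 < p"
  shows "set_integrable lborel {-pi..pi} (\<lambda>l. \<bar>l\<bar> powr p)"
proof -
  have h1: "((\<lambda>x. x powr p) has_integral (pi powr (p+1) / (p+1))) {0..pi}"
    by (rule has_integral_powr_from_0) (use p in auto)
  have h1': "((\<lambda>x. \<bar>x\<bar> powr p) has_integral (pi powr (p+1) / (p+1))) {0..pi}"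
    by (rule has_integral_spike_finite[OF finite.emptyI _ h1]) auto
  have h2: "((\<lambda>x. \<bar>x\<bar> powr p) has_integral (pi powr (p+1) / (p+1))) {-pi..0}"
  proof -
    have "((\<lambda>x. \<bar>-x\<bar> powr p) has_integral (pi powr (p+1) / (p+1))) {-pi..-0}"
      using h1' by (subst has_integral_reflect_real) simp
    then show ?thesis by simp
  qed
  have "((\<lambda>x. \<bar>x\<bar> powr p) has_integral (pi powr (p+1) / (p+1) + pi powr (p+1) / (p+1))) {-pi..pi}"
    by (rule has_integral_combine[OF _ _ h2 h1']) auto
  then have "(\<lambda>x. \<bar>x\<bar> powr p) integrable_on {-pi..pi}" by blast
  then have "(\<lambda>x. \<bar>x\<bar> powr p) absolutely_integrable_on {-pi..pi}"
    by (subst absolutely_integrable_on_iff_nonneg) auto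
  then show ?thesis
    unfolding set_integrable_def
    by (subst (asm) integrable_completion) auto
qed

locale specL =
  fixes a b :: "nat \<Rightarrow> real" and \<alpha> :: real and D :: "complex \<Rightarrow> complex"
  assumes al1: "-1/2 < \<alpha>" and al2: "\<alpha> < 0"
   and a0: "\<And>k. 0 \<le> a k" and sa: "summable a" and sa1: "suminf a < 1"
   and Dser: "\<And>z. norm z \<le> 1 \<Longrightarrow> (\<lambda>k. complex_of_real (a k) * z ^ Suc k) sums D z"
   and bser: "\<And>z. norm z < 1 \<Longrightarrow> (\<lambda>k. complex_of_real (b k) * z ^ k) sums ((1 - z) powr complex_of_real \<alpha> / (1 - D z))"
begin

definition "\<delta> = 1 - suminf a"

lemma delta_pos: "0 < \<delta>" using sa1 by (simp add: \<delta>_def)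

lemma Dbound: assumes "norm z \<le> 1" shows "\<delta> \<le> norm (1 - D z)"
proof -
  have t: "norm (complex_of_real (a k) * z ^ Suc k) \<le> a k" for k
  proof -
    have "norm (complex_of_real (a k) * z ^ Suc k) = a k * norm z ^ Suc k"
      using a0[of k] by (simp add: norm_mult norm_power)
    also have "\<dots> \<le> a k * 1" using assms a0[of k] by (intro mult_left_mono power_le_one) auto
    finally show ?thesis by simp
  qed
  have sn: "summable (\<lambda>k. norm (complex_of_real (a k) * z ^ Suc k))"
    by (rule summable_comparison_test[OF _ sa]) (use t in auto)
  have "norm (D z) \<le> (\<Sum>k. norm (complex_of_real (a k) * z ^ Suc k))"
    using summable_norm[OF sn] Dser[OF assms] by (simp add: sums_iff)
  also have "\<dots> \<le> suminf a" by (rule suminf_le[OF t sn sa])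
  finally have "norm (D z) \<le> suminf a" .
  then show ?thesis using norm_triangle_ineq2[of 1 "D z"] by (simp add: \<delta>_def)
qed

lemma Dcont: "continuous_on (cball 0 1) D"
proof -
  have ul: "uniform_limit (cball 0 1) (\<lambda>n z. \<Sum>k<n. complex_of_real (a k) * z ^ Suc k)
             (\<lambda>z. \<Sum>k. complex_of_real (a k) * z ^ Suc k) sequentially"
  proof (rule Weierstrass_m_test[OF _ sa])
    fix n and z :: complex assume "z \<in> cball 0 1"
    then have "norm z \<le> 1" by simp
    have "norm (complex_of_real (a n) * z ^ Suc n) = a n * norm z ^ Suc n"
      using a0[of n] by (simp add: norm_mult norm_power)
    also have "\<dots> \<le> a n * 1" using \<open>norm z \<le> 1\<close> a0[of n] by (intro mult_left_mono power_le_one) auto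
    finally show "norm (complex_of_real (a n) * z ^ Suc n) \<le> a n" by simp
  qed
  have "continuous_on (cball 0 1) (\<lambda>z. \<Sum>k. complex_of_real (a k) * z ^ Suc k)"
    by (rule uniform_limit_theorem[OF _ ul]) (auto intro!: always_eventually continuous_intros)
  moreover have "(\<Sum>k. complex_of_real (a k) * z ^ Suc k) = D z" if "z \<in> cball 0 1" for z
    using Dser[of z] that by (simp add: sums_iff)
  ultimately show ?thesis using continuous_on_cong[OF refl, of "cball 0 1" "\<lambda>z. \<Sum>k. complex_of_real (a k) * z ^ Suc k" D] by simp
qed

definition "Phi z = norm (1 - z) powr (2 * \<alpha>) / (norm (1 - D z))\<^sup>2"

definition "W l = (l\<^sup>2 / 12) powr \<alpha> / \<delta>\<^sup>2"

lemma Phi_bound: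
  assumes r: "1/2 \<le> r" "r \<le> 1" and l: "\<bar>l\<bar> \<le> pi" "l \<noteq> 0"
  shows "Phi (complex_of_real r * exp (- \<i> * complex_of_real l)) \<le> W l"
proof -
  define z where "z = complex_of_real r * exp (- \<i> * complex_of_real l)"
  have nz: "norm z \<le> 1" using r by (simp add: z_def norm_mult)
  have lb: "l\<^sup>2 / 12 \<le> (norm (1 - z))\<^sup>2" unfolding z_def by (rule norm_lb[OF r l(1)])
  have lpos: "0 < l\<^sup>2 / 12" using l by simp
  have "norm (1 - z) powr (2 * \<alpha>) = ((norm (1 - z))\<^sup>2) powr \<alpha>"
  proof -
    have "norm (1 - z) powr (2 * \<alpha>) = (norm (1 - z) powr 2) powr \<alpha>" by (simp only: powr_powr)
    also have "norm (1 - z) powr 2 = (norm (1 - z))\<^sup>2" by (rule powr_numeral) simp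
    finally show ?thesis .
  qed
  also have "\<dots> \<le> (l\<^sup>2 / 12) powr \<alpha>"
    by (rule powr_mono2'[OF _ lpos lb]) (use al2 in simp)
  finally have num: "norm (1 - z) powr (2 * \<alpha>) \<le> (l\<^sup>2 / 12) powr \<alpha>" .
  have den: "\<delta>\<^sup>2 \<le> (norm (1 - D z))\<^sup>2"
    using Dbound[OF nz] delta_pos by (intro power_mono) auto
  have "Phi z \<le> (l\<^sup>2 / 12) powr \<alpha> / \<delta>\<^sup>2"
    unfolding Phi_def
    by (rule frac_le[OF _ num _ den]) (use delta_pos in auto)
  then show ?thesis by (simp add: z_def W_def)
qed

lemma W_int: "set_integrable lborel {-pi..pi} W"
proof -
  have eq: "W l = ((1/12) powr \<alpha> / \<delta>\<^sup>2) * \<bar>l\<bar> powr (2 * \<alpha>)" for l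
  proof (cases "l = 0")
    case False
    have "(l\<^sup>2 / 12) powr \<alpha> = (l\<^sup>2) powr \<alpha> * (1/12) powr \<alpha>"
      by (simp add: powr_mult[symmetric])
    also have "(l\<^sup>2) powr \<alpha> = \<bar>l\<bar> powr (2 * \<alpha>)"
    proof -
      have "\<bar>l\<bar> powr (2 * \<alpha>) = (\<bar>l\<bar> powr 2) powr \<alpha>" by (simp only: powr_powr)
      also have "\<bar>l\<bar> powr 2 = l\<^sup>2" by (subst powr_numeral) simp_all
      finally show ?thesis by simp
    qed
    finally show ?thesis by (simp add: W_def)
  qed (simp add: W_def)
  have "set_integrable lborel {-pi..pi} (\<lambda>l. ((1/12) powr \<alpha> / \<delta>\<^sup>2) * \<bar>l\<bar> powr (2 * \<alpha>))"
    by (rule set_integrable_mult_right) (rule powr_abs_int, use al1 in simp)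
  then show ?thesis by (simp add: eq[abs_def])
qed

lemma normB:
  assumes "norm z < 1"
  shows "(norm ((1 - z) powr complex_of_real \<alpha> / (1 - D z)))\<^sup>2 = Phi z"
proof -
  have "norm ((1 - z) powr complex_of_real \<alpha>) = norm (1 - z) powr \<alpha>"
    by (simp add: norm_powr_real_powr')
  moreover have "(norm (1 - z) powr \<alpha>)\<^sup>2 = norm (1 - z) powr (2 * \<alpha>)"
  proof -
    have "(norm (1 - z) powr \<alpha>)\<^sup>2 = norm (1 - z) powr \<alpha> * norm (1 - z) powr \<alpha>" by (rule power2_eq_square)
    also have "\<dots> = norm (1 - z) powr (\<alpha> + \<alpha>)" by (rule powr_add[symmetric])
    finally show ?thesis by simp
  qed
  ultimately show ?thesis by (simp add: Phi_def norm_divide power_divide)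
qed

definition "ee l = exp (- \<i> * complex_of_real l)"
definition "rr n = 1 - 1 / (real n + 2)"
definition "Sr n l = (\<Sum>k. complex_of_real (b k) * (complex_of_real (rr n) * ee l) ^ k)"

lemma rr: "1/2 \<le> rr n" "rr n < 1" "0 \<le> rr n"
  unfolding rr_def by (auto simp: field_simps)

lemma rr_lim: "rr \<longlonglongrightarrow> 1"
proof -
  have l0: "(\<lambda>n. inverse (real (Suc (Suc n)))) \<longlonglongrightarrow> 0"
    by (rule LIMSEQ_Suc[OF LIMSEQ_inverse_real_of_nat])
  have "inverse (real (Suc (Suc n))) = 1 / (real n + 2)" for n
    by (simp add: field_simps)
  with l0 have "(\<lambda>n. 1 / (real n + 2)) \<longlonglongrightarrow> 0" by simp
  then have "(\<lambda>n. 1 - 1 / (real n + 2)) \<longlonglongrightarrow> 1 - 0" by (intro tendsto_intros)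
  then show ?thesis by (simp add: rr_def[abs_def])
qed

lemma nee: "norm (ee l) = 1" by (simp add: ee_def)

lemma cabs: assumes "0 \<le> \<rho>" "\<rho> < 1" shows "summable (\<lambda>k. \<bar>b k * \<rho> ^ k\<bar>)"
proof -
  define \<rho>' where "\<rho>' = (1 + \<rho>) / 2"
  have r': "\<rho> < \<rho>'" "\<rho>' < 1" using assms by (auto simp: \<rho>'_def)
  have "summable (\<lambda>k. complex_of_real (b k) * complex_of_real \<rho>' ^ k)"
    using bser[of "complex_of_real \<rho>'"] r' assms by (auto simp: sums_iff)
  then have "summable (\<lambda>k. norm (complex_of_real (b k) * complex_of_real \<rho> ^ k))"
    by (rule powser_insidea) (use r' assms in auto)
  then show ?thesis by (simp add: norm_mult norm_power abs_mult power_abs)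
qed

lemma Sr_alt: "Sr n l = (\<Sum>k. complex_of_real (b k * rr n ^ k) * exp (- \<i> * complex_of_real l) ^ k)"
  unfolding Sr_def ee_def by (simp add: power_mult_distrib mult_ac)

lemma Sr_Phi: "(norm (Sr n l))\<^sup>2 = Phi (complex_of_real (rr n) * ee l)"
proof -
  have nz: "norm (complex_of_real (rr n) * ee l) < 1" using rr[of n] by (simp add: norm_mult nee)
  have "Sr n l = (1 - complex_of_real (rr n) * ee l) powr complex_of_real \<alpha> / (1 - D (complex_of_real (rr n) * ee l))"
    unfolding Sr_def using bser[OF nz] by (simp add: sums_iff)
  then show ?thesis using normB[OF nz] by simp
qed

lemma parseval_n:
  "(LINT l:{-pi..pi}|lborel. exp (\<i> * of_int h * complex_of_real l) * complex_of_real ((norm (Sr n l))\<^sup>2))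
     = complex_of_real (2 * pi * (\<Sum>k. (b k * rr n ^ k) * (b (k + nat \<bar>h\<bar>) * rr n ^ (k + nat \<bar>h\<bar>))))"
  unfolding Sr_alt by (rule parseval[OF cabs[OF rr(3) rr(2)]])

lemma De_cont: "continuous_on UNIV (\<lambda>l. D (ee l))"
proof (rule continuous_on_compose2[OF Dcont])
  show "continuous_on UNIV ee" unfolding ee_def[abs_def] by (intro continuous_intros)
  show "ee ` UNIV \<subseteq> cball 0 1" by (auto simp: nee)
qed

lemma De_meas[measurable]: "(\<lambda>l. D (ee l)) \<in> borel_measurable borel"
  by (rule borel_measurable_continuous_onI[OF De_cont])

lemma ee_meas[measurable]: "ee \<in> borel_measurable borel"
  unfolding ee_def[abs_def] by (intro borel_measurable_continuous_onI continuous_intros)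

lemma Phi_ee_meas[measurable]: "(\<lambda>l. Phi (ee l)) \<in> borel_measurable borel"
  unfolding Phi_def by measurable

lemma Sr_meas[measurable]: "Sr n \<in> borel_measurable borel"
  unfolding Sr_def[abs_def] by measurable

lemma W_meas[measurable]: "W \<in> borel_measurable borel"
  unfolding W_def[abs_def] by measurable

lemma Phi_lim:
  assumes l: "\<bar>l\<bar> \<le> pi" "l \<noteq> 0"
  shows "(\<lambda>n. Phi (complex_of_real (rr n) * ee l)) \<longlonglongrightarrow> Phi (ee l)"
proof -
  define z where "z n = complex_of_real (rr n) * ee l" for n
  have zl: "z \<longlonglongrightarrow> ee l"
  proof -
    have "(\<lambda>n. complex_of_real (rr n) * ee l) \<longlonglongrightarrow> complex_of_real 1 * ee l"
      by (intro tendsto_intros rr_lim)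
    then show ?thesis by (simp add: z_def[abs_def])
  qed
  have zin: "z n \<in> cball 0 1" for n using rr[of n] by (simp add: z_def norm_mult nee)
  have eein: "ee l \<in> cball 0 1" by (simp add: nee)
  have Dl: "(\<lambda>n. D (z n)) \<longlonglongrightarrow> D (ee l)"
    by (rule continuous_on_tendsto_compose[OF Dcont zl eein]) (use zin in auto)
  have n1: "norm (1 - ee l) \<noteq> 0"
  proof -
    have "l\<^sup>2 / 12 \<le> (norm (1 - complex_of_real 1 * ee l))\<^sup>2"
      unfolding ee_def by (rule norm_lb) (use l in auto)
    moreover have "0 < l\<^sup>2 / 12" using l by simp
    ultimately show ?thesis by auto
  qed
  have n2: "(norm (1 - D (ee l)))\<^sup>2 \<noteq> 0"
    using Dbound[of "ee l"] delta_pos by (auto simp: nee)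
  have "(\<lambda>n. norm (1 - z n) powr (2 * \<alpha>) / (norm (1 - D (z n)))\<^sup>2)
      \<longlonglongrightarrow> norm (1 - ee l) powr (2 * \<alpha>) / (norm (1 - D (ee l)))\<^sup>2"
    by (intro tendsto_divide tendsto_powr tendsto_norm tendsto_diff tendsto_power tendsto_const zl Dl n1 n2)
  then show ?thesis by (simp add: Phi_def z_def[abs_def])
qed

lemma lim_int:
  "(\<lambda>n. LINT l:{-pi..pi}|lborel. exp (\<i> * of_int h * complex_of_real l) * complex_of_real ((norm (Sr n l))\<^sup>2))
    \<longlonglongrightarrow> (LINT l:{-pi..pi}|lborel. exp (\<i> * of_int h * complex_of_real l) * complex_of_real (Phi (ee l)))"
  unfolding set_lebesgue_integral_def
proof (rule integral_dominated_convergence[where w = "\<lambda>l. indicator {-pi..pi} l *\<^sub>R W l"])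
  show "integrable lborel (\<lambda>l. indicator {-pi..pi} l *\<^sub>R W l)"
    using W_int by (simp add: set_integrable_def)
  show "AE l in lborel. (\<lambda>n. indicator {-pi..pi} l *\<^sub>R (exp (\<i> * of_int h * complex_of_real l) * complex_of_real ((norm (Sr n l))\<^sup>2)))
      \<longlonglongrightarrow> indicator {-pi..pi} l *\<^sub>R (exp (\<i> * of_int h * complex_of_real l) * complex_of_real (Phi (ee l)))"
    using AE_lborel_singleton[of 0]
  proof eventually_elim
    case (elim l)
    show ?case
    proof (cases "l \<in> {-pi..pi}")
      case True
      then have "\<bar>l\<bar> \<le> pi" by auto
      from Phi_lim[OF this elim] have "(\<lambda>n. (norm (Sr n l))\<^sup>2) \<longlonglongrightarrow> Phi (ee l)"
        by (simp add: Sr_Phi)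
      then have t2: "(\<lambda>n. complex_of_real ((norm (Sr n l))\<^sup>2)) \<longlonglongrightarrow> complex_of_real (Phi (ee l))"
        by (rule tendsto_of_real)
      show ?thesis using True tendsto_mult_left[OF t2, of "exp (\<i> * of_int h * complex_of_real l)"] by simp
    qed simp
  qed
  show "AE l in lborel. norm (indicator {-pi..pi} l *\<^sub>R (exp (\<i> * of_int h * complex_of_real l) * complex_of_real ((norm (Sr n l))\<^sup>2)))
          \<le> indicator {-pi..pi} l *\<^sub>R W l" for n
    using AE_lborel_singleton[of 0]
  proof eventually_elim
    case (elim l)
    show ?case
    proof (cases "l \<in> {-pi..pi}")
      case True
      then have "\<bar>l\<bar> \<le> pi" by auto
      have "norm (exp (\<i> * of_int h * complex_of_real l) * complex_of_real ((norm (Sr n l))\<^sup>2)) = (norm (Sr n l))\<^sup>2"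
        by (simp add: norm_mult norm_power)
      also have "\<dots> \<le> W l" unfolding Sr_Phi ee_def by (rule Phi_bound) (use rr[of n] \<open>\<bar>l\<bar> \<le> pi\<close> elim in auto)
      finally show ?thesis using True by simp
    qed simp
  qed
qed measurable

lemma Phi_nonneg: "0 \<le> Phi z" by (simp add: Phi_def)

lemma W_nonneg: "\<bar>W l\<bar> = W l"
  unfolding W_def using delta_pos by simp

definition "IW = (LINT l:{-pi..pi}|lborel. W l)"

lemma bound_int:
  assumes f: "f \<in> borel_measurable borel" and b: "\<And>l. \<bar>l\<bar> \<le> pi \<Longrightarrow> l \<noteq> 0 \<Longrightarrow> \<bar>f l\<bar> \<le> W l"
  shows "set_integrable lborel {-pi..pi} (f :: real \<Rightarrow> real)"
proof (rule set_integrable_bound[OF W_int])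
  show "set_borel_measurable lborel {-pi..pi} f" unfolding set_borel_measurable_def using f by measurable
  show "AE x in lborel. x \<in> {-pi..pi} \<longrightarrow> norm (f x) \<le> norm (W x)"
    using AE_lborel_singleton[of 0] by eventually_elim (use b W_nonneg in auto)
qed

lemma sq_bound: "2 * pi * (\<Sum>k. (b k * rr n ^ k)\<^sup>2) \<le> IW"
proof -
  have p0: "(LINT l:{-pi..pi}|lborel. exp (\<i> * of_int 0 * complex_of_real l) * complex_of_real ((norm (Sr n l))\<^sup>2))
     = complex_of_real (2 * pi * (\<Sum>k. (b k * rr n ^ k) * (b (k + nat \<bar>0\<bar>) * rr n ^ (k + nat \<bar>0\<bar>))))"
    by (rule parseval_n)
  have l1: "(\<lambda>l. exp (\<i> * of_int 0 * complex_of_real l) * complex_of_real ((norm (Sr n l))\<^sup>2))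
      = (\<lambda>l. complex_of_real ((norm (Sr n l))\<^sup>2))" by simp
  from p0 have "complex_of_real (LINT l:{-pi..pi}|lborel. (norm (Sr n l))\<^sup>2)
      = complex_of_real (2 * pi * (\<Sum>k. (b k * rr n ^ k) * (b (k + nat \<bar>0\<bar>) * rr n ^ (k + nat \<bar>0\<bar>))))"
    unfolding l1 set_integral_complex_of_real .
  then have "(LINT l:{-pi..pi}|lborel. (norm (Sr n l))\<^sup>2)
      = 2 * pi * (\<Sum>k. (b k * rr n ^ k) * (b (k + nat \<bar>0\<bar>) * rr n ^ (k + nat \<bar>0\<bar>)))"
    by (simp only: of_real_eq_iff)
  then have e: "(LINT l:{-pi..pi}|lborel. (norm (Sr n l))\<^sup>2) = 2 * pi * (\<Sum>k. (b k * rr n ^ k)\<^sup>2)"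
    by (simp add: power2_eq_square)
  have bnd: "\<bar>(norm (Sr n l))\<^sup>2\<bar> \<le> W l" if "\<bar>l\<bar> \<le> pi" "l \<noteq> 0" for l
    unfolding Sr_Phi using Phi_bound[of "rr n" l] rr[of n] that abs_of_nonneg[OF Phi_nonneg] by (simp add: ee_def)
  have "(LINT l:{-pi..pi}|lborel. (norm (Sr n l))\<^sup>2) \<le> IW"
    unfolding IW_def
  proof (rule set_integral_mono_AE[OF bound_int W_int])
    show "(\<lambda>l. (norm (Sr n l))\<^sup>2) \<in> borel_measurable borel" by measurable
    show "\<bar>(norm (Sr n l))\<^sup>2\<bar> \<le> W l" if "\<bar>l\<bar> \<le> pi" "l \<noteq> 0" for l using bnd that .
    show "AE x\<in>{-pi..pi} in lborel. (norm (Sr n x))\<^sup>2 \<le> W x"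
      using AE_lborel_singleton[of 0] by eventually_elim (use bnd in auto)
  qed
  with e show ?thesis by simp
qed

lemma b_sq: "summable (\<lambda>k. (b k)\<^sup>2)"
proof (rule summableI_nonneg_bounded[where x = "IW / (2 * pi)"])
  fix N
  have le: "(\<Sum>k<N. (b k * rr n ^ k)\<^sup>2) \<le> IW / (2 * pi)" for n
  proof -
    have ca: "summable (\<lambda>k. \<bar>b k * rr n ^ k\<bar>)" by (rule cabs[OF rr(3) rr(2)])
    have "\<bar>b k * rr n ^ k\<bar> \<le> (\<Sum>k. \<bar>b k * rr n ^ k\<bar>)" for k
      using sum_le_suminf[OF ca, of "{k}"] by simp
    then have sq: "summable (\<lambda>k. (b k * rr n ^ k)\<^sup>2)"
      by (intro summable_comparison_test[OF _ summable_mult2[OF ca, of "\<Sum>k. \<bar>b k * rr n ^ k\<bar>"]])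
         (auto simp: power2_eq_square abs_mult intro!: mult_left_mono)
    have "(\<Sum>k<N. (b k * rr n ^ k)\<^sup>2) \<le> (\<Sum>k. (b k * rr n ^ k)\<^sup>2)"
      by (rule sum_le_suminf[OF sq]) auto
    also have "\<dots> \<le> IW / (2 * pi)" using sq_bound[of n] by (simp add: field_simps)
    finally show ?thesis .
  qed
  have "(\<lambda>n. \<Sum>k<N. (b k * rr n ^ k)\<^sup>2) \<longlonglongrightarrow> (\<Sum>k<N. (b k * 1 ^ k)\<^sup>2)"
    by (intro tendsto_intros rr_lim)
  then show "(\<Sum>k<N. (b k)\<^sup>2) \<le> IW / (2 * pi)"
    using le by (intro LIMSEQ_le_const2) auto
qed simp

lemma rhs_lim:
  "(\<lambda>n. \<Sum>k. (b k * rr n ^ k) * (b (k + H) * rr n ^ (k + H))) \<longlonglongrightarrow> (\<Sum>k. b k * b (k + H))"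
proof -
  define Mk where "Mk k = ((b k)\<^sup>2 + (b (k + H))\<^sup>2) / 2" for k
  have sM: "summable Mk"
    unfolding Mk_def using b_sq by (intro summable_divide summable_add) (auto simp: summable_iff_shift[of "\<lambda>k. (b k)\<^sup>2" H])
  have tb: "\<bar>b k * b (k + H)\<bar> \<le> Mk k" for k
  proof -
    have e: "(\<bar>b k\<bar> - \<bar>b (k + H)\<bar>)\<^sup>2 = (b k)\<^sup>2 + (b (k + H))\<^sup>2 - 2 * (\<bar>b k\<bar> * \<bar>b (k + H)\<bar>)"
      by (simp only: power2_diff power2_abs mult.assoc)
    have z: "0 \<le> (\<bar>b k\<bar> - \<bar>b (k + H)\<bar>)\<^sup>2" by simp
    have "2 * (\<bar>b k\<bar> * \<bar>b (k + H)\<bar>) \<le> (b k)\<^sup>2 + (b (k + H))\<^sup>2"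
      using z unfolding e by linarith
    then show ?thesis unfolding Mk_def abs_mult by (simp add: field_simps)
  qed
  have ul: "uniform_limit {0..1} (\<lambda>n \<rho>. \<Sum>k<n. b k * b (k + H) * \<rho> ^ (2 * k + H))
        (\<lambda>\<rho>. \<Sum>k. b k * b (k + H) * \<rho> ^ (2 * k + H)) sequentially"
  proof (rule Weierstrass_m_test[OF _ sM])
    fix n and \<rho> :: real assume "\<rho> \<in> {0..1}"
    then have "\<bar>\<rho> ^ (2 * n + H)\<bar> \<le> 1" by (auto simp: power_le_one abs_le_iff)
    then have "\<bar>b n * b (n + H)\<bar> * \<bar>\<rho> ^ (2 * n + H)\<bar> \<le> \<bar>b n * b (n + H)\<bar> * 1"
      by (intro mult_left_mono) auto
    then show "norm (b n * b (n + H) * \<rho> ^ (2 * n + H)) \<le> Mk n"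
      using tb[of n] by (simp add: abs_mult)
  qed
  have cont: "continuous_on {0..1} (\<lambda>\<rho>. \<Sum>k. b k * b (k + H) * \<rho> ^ (2 * k + H))"
    by (rule uniform_limit_theorem[OF _ ul]) (auto intro!: always_eventually continuous_intros)
  have rin: "rr n \<in> {0..1}" for n using rr[of n] by auto
  have "(\<lambda>n. \<Sum>k. b k * b (k + H) * rr n ^ (2 * k + H)) \<longlonglongrightarrow> (\<Sum>k. b k * b (k + H) * 1 ^ (2 * k + H))"
    by (rule continuous_on_tendsto_compose[OF cont rr_lim]) (use rin in auto)
  moreover have eqt: "(b k * rr n ^ k) * (b (k + H) * rr n ^ (k + H)) = b k * b (k + H) * rr n ^ (2 * k + H)" for k n
  proof -
    have p: "rr n ^ (2 * k + H) = rr n ^ k * rr n ^ (k + H)"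
      unfolding mult_2 power_add by (simp only: mult_ac)
    show ?thesis unfolding p by (simp only: mult_ac)
  qed
  ultimately show ?thesis by (simp only: eqt mult_1_right power_one)
qed

lemma int_limit:
  "(LINT l:{-pi..pi}|lborel. exp (\<i> * of_int h * complex_of_real l) * complex_of_real (Phi (ee l)))
     = complex_of_real (2 * pi * (\<Sum>k. b k * b (k + nat \<bar>h\<bar>)))"
proof -
  have "(\<lambda>n. complex_of_real (2 * pi * (\<Sum>k. (b k * rr n ^ k) * (b (k + nat \<bar>h\<bar>) * rr n ^ (k + nat \<bar>h\<bar>)))))
     \<longlonglongrightarrow> complex_of_real (2 * pi * (\<Sum>k. b k * b (k + nat \<bar>h\<bar>)))"
    by (intro tendsto_intros rhs_lim)
  with lim_int[of h] show ?thesis unfolding parseval_n by (rule LIMSEQ_unique)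
qed

theorem spectral:
  "is_spectral_density (ma_autocov m s2 b)
     (\<lambda>l. m\<^sup>2 * s2 / (2 * pi) * (norm (1 - exp (- \<i> * complex_of_real l)) powr (2 * \<alpha>)
          / (norm (1 - D (exp (- \<i> * complex_of_real l))))\<^sup>2))"
proof -
  have eqf: "(\<lambda>l. m\<^sup>2 * s2 / (2 * pi) * (norm (1 - exp (- \<i> * complex_of_real l)) powr (2 * \<alpha>)
          / (norm (1 - D (exp (- \<i> * complex_of_real l))))\<^sup>2)) = (\<lambda>l. m\<^sup>2 * s2 / (2 * pi) * Phi (ee l))"
    by (simp add: Phi_def ee_def)
  have gi: "set_integrable lborel {-pi..pi} (\<lambda>l. Phi (ee l))"
  proof (rule bound_int)
    show "(\<lambda>l. Phi (ee l)) \<in> borel_measurable borel" by measurable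
    show "\<bar>Phi (ee l)\<bar> \<le> W l" if "\<bar>l\<bar> \<le> pi" "l \<noteq> 0" for l
      using Phi_bound[of 1 l] that by (simp add: ee_def Phi_def)
  qed
  show ?thesis
    unfolding eqf is_spectral_density_def
  proof (intro conjI allI)
    show "set_integrable lborel {-pi..pi} (\<lambda>l. m\<^sup>2 * s2 / (2 * pi) * Phi (ee l))"
      using gi by (rule set_integrable_mult_right)
    fix h :: int
    have "(LINT l:{-pi..pi}|lborel. exp (\<i> * of_int h * complex_of_real l) * complex_of_real (m\<^sup>2 * s2 / (2 * pi) * Phi (ee l)))
        = (LINT l:{-pi..pi}|lborel. complex_of_real (m\<^sup>2 * s2 / (2 * pi)) * (exp (\<i> * of_int h * complex_of_real l) * complex_of_real (Phi (ee l))))"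
      by (simp add: mult_ac)
    also have "\<dots> = complex_of_real (m\<^sup>2 * s2 / (2 * pi)) * complex_of_real (2 * pi * (\<Sum>k. b k * b (k + nat \<bar>h\<bar>)))"
      by (simp only: set_integral_mult_right int_limit)
    also have "\<dots> = complex_of_real (ma_autocov m s2 b h)"
      by (simp add: ma_autocov_def)
    finally show "complex_of_real (ma_autocov m s2 b h) =
        (LINT l:{-pi..pi}|lborel. exp (\<i> * of_int h * complex_of_real l) * complex_of_real (m\<^sup>2 * s2 / (2 * pi) * Phi (ee l)))"
      by simp
  qed
qed

end


context betaL
begin

lemma Dser_lemma:
  assumes b: "1 < \<beta>" and z: "norm z \<le> 1"
  shows "(\<lambda>k. complex_of_real (mom k \<beta>) * z ^ Suc k) sums
           (complex_of_real (Gamma (1 + \<alpha> + \<beta>) / (Gamma (1 + \<alpha>) * Gamma (1 + \<beta>))) * z * hyp2f1 1 (-\<alpha>) (1 + \<beta>) z)"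
proof -
  define K where "K = Gamma (1 + \<alpha> + \<beta>) / (Gamma (1 + \<alpha>) * Gamma (1 + \<beta>))"
  define t where "t n = complex_of_real (pochhammer 1 n * pochhammer (-\<alpha>) n / (pochhammer (1 + \<beta>) n * fact n)) * z^n" for n
  have b0: "0 < \<beta>" using b by simp
  have Kpos: "K > 0" unfolding K_def using a1 a2 b by auto
  have te: "complex_of_real (mom k \<beta>) * z ^ k = complex_of_real K * t k" for k
  proof -
    have "pochhammer 1 k * pochhammer (-\<alpha>) k / (pochhammer (1 + \<beta>) k * fact k)
        = pochhammer (-\<alpha>) k / pochhammer (1 + \<beta>) k"
      by (simp flip: pochhammer_fact)
    then show ?thesis unfolding t_def momb[OF b0] K_def by simp
  qed
  have sm: "summable (\<lambda>k. complex_of_real (mom k \<beta>) * z ^ k)"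
  proof (rule summable_norm_cancel, rule summable_comparison_test[OF _ momsum(1)[OF b]])
    have "norm (complex_of_real (mom n \<beta>) * z ^ n) \<le> mom n \<beta>" for n
    proof -
      have "norm (complex_of_real (mom n \<beta>) * z ^ n) = mom n \<beta> * norm z ^ n"
        using mom_nonneg[of \<beta> n] a1 b by (simp add: norm_mult norm_power)
      also have "\<dots> \<le> mom n \<beta> * 1"
        using z mom_nonneg[of \<beta> n] a1 b by (intro mult_left_mono power_le_one) auto
      finally show ?thesis by simp
    qed
    then show "\<exists>N. \<forall>n\<ge>N. norm (norm (complex_of_real (mom n \<beta>) * z ^ n)) \<le> mom n \<beta>" by auto
  qed
  define s where "s = (\<Sum>k. complex_of_real (mom k \<beta>) * z ^ k)"
  have ss: "(\<lambda>k. complex_of_real (mom k \<beta>) * z ^ k) sums s" unfolding s_def using sm by (rule summable_sums)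
  then have "(\<lambda>k. complex_of_real K * t k) sums s" by (simp add: te)
  then have "(\<lambda>k. (1 / complex_of_real K) * (complex_of_real K * t k)) sums ((1 / complex_of_real K) * s)"
    by (rule sums_mult)
  then have "t sums (s / complex_of_real K)" using Kpos by simp
  then have hy: "hyp2f1 1 (-\<alpha>) (1 + \<beta>) z = s / complex_of_real K"
    unfolding hyp2f1_def t_def[abs_def] by (simp add: sums_iff)
  have "(\<lambda>k. z * (complex_of_real (mom k \<beta>) * z ^ k)) sums (z * s)" by (rule sums_mult[OF ss])
  moreover have "z * (complex_of_real (mom k \<beta>) * z ^ k) = complex_of_real (mom k \<beta>) * z ^ Suc k" for k
    by (simp add: mult_ac)
  moreover have "z * s = complex_of_real K * z * hyp2f1 1 (-\<alpha>) (1 + \<beta>) z"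
    using Kpos unfolding hy by simp
  ultimately show ?thesis unfolding K_def by simp
qed

end

theorem mainTheorem3:
  fixes M :: "'a measure" and phi psi c :: "'a \<Rightarrow> real"
    and \<alpha> \<beta> \<sigma>2 :: real and bt :: "nat \<Rightarrow> real"
  defines "K \<equiv> Gamma (1 + \<alpha> + \<beta>) / (Gamma (1 + \<alpha>) * Gamma (1 + \<beta>))"
  assumes M: "prob_space M"
    and \<alpha>: "-1/2 < \<alpha>" "\<alpha> < 0" and \<beta>: "1 < \<beta>"
    and meas: "phi \<in> borel_measurable M" "psi \<in> borel_measurable M" "c \<in> borel_measurable M"
    and phi_beta: "distributed M lborel phi (\<lambda>t. ennreal (beta_density (-\<alpha>) (1 + \<alpha>) t))"
    and psi_int: "integrable M psi"
    and cond: "AE \<omega> in M. real_cond_exp M (vimage_algebra (space M) phi borel) psi \<omega>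
                 = (1 - phi \<omega>) powr \<beta>"
    and c_pos: "AE \<omega> in M. 0 < c \<omega>" and c_int: "integrable M c"
    and c_indep: "prob_space.indep_set M (sets (vimage_algebra (space M) c borel))
                 (sets (vimage_algebra (space M) (\<lambda>\<omega>. (phi \<omega>, psi \<omega>)) (borel \<Otimes>\<^sub>M borel)))"
    and \<sigma>2: "0 < \<sigma>2"
    and bt: "\<And>x::complex. norm x < 1 \<Longrightarrow>
       (\<lambda>k. complex_of_real (bt k) * x ^ k) sums
         ((integral\<^sup>L M (\<lambda>\<omega>. 1 / (1 - x * complex_of_real (phi \<omega>))))
          / (1 - x * integral\<^sup>L M (\<lambda>\<omega>. complex_of_real (psi \<omega>) / (1 - x * complex_of_real (phi \<omega>)))))"
  shows "(\<forall>x::complex. norm x < 1 \<longrightarrow>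
            integral\<^sup>L M (\<lambda>\<omega>. 1 / (1 - x * complex_of_real (phi \<omega>))) = (1 - x) powr complex_of_real \<alpha>)
       \<and> (\<forall>x::complex. norm x < 1 \<longrightarrow>
            integral\<^sup>L M (\<lambda>\<omega>. complex_of_real ((1 - phi \<omega>) powr \<beta>) / (1 - x * complex_of_real (phi \<omega>)))
              = complex_of_real K * hyp2f1 1 (-\<alpha>) (1 + \<beta>) x)
       \<and> (\<forall>x::complex. norm x < 1 \<longrightarrow>
            (\<lambda>k. complex_of_real (bt k) * x ^ k) sums
              ((1 - x) powr complex_of_real \<alpha> / (1 - complex_of_real K * x * hyp2f1 1 (-\<alpha>) (1 + \<beta>) x)))
       \<and> is_spectral_density (ma_autocov (integral\<^sup>L M c) \<sigma>2 bt)
           (\<lambda>l. (integral\<^sup>L M c)\<^sup>2 * \<sigma>2 / (2 * pi)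
                * (norm (1 - exp (- \<i> * complex_of_real l)) powr (2 * \<alpha>)
                   / (norm (1 - complex_of_real K * exp (- \<i> * complex_of_real l)
                          * hyp2f1 1 (-\<alpha>) (1 + \<beta>) (exp (- \<i> * complex_of_real l))))\<^sup>2))"
  proof -
  interpret B: betaL M phi \<alpha>
    by (rule betaL.intro[OF M _ _ meas(1) phi_beta]) (use \<alpha> in auto)
  have b0: "0 < \<beta>" "0 \<le> \<beta>" using \<beta> by auto
  have P1: "\<forall>x::complex. norm x < 1 \<longrightarrow>
            integral\<^sup>L M (\<lambda>\<omega>. 1 / (1 - x * complex_of_real (phi \<omega>))) = (1 - x) powr complex_of_real \<alpha>"
    by (intro allI impI B.part1)
  have P2: "\<forall>x::complex. norm x < 1 \<longrightarrow>
            integral\<^sup>L M (\<lambda>\<omega>. complex_of_real ((1 - phi \<omega>) powr \<beta>) / (1 - x * complex_of_real (phi \<omega>)))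
              = complex_of_real K * hyp2f1 1 (-\<alpha>) (1 + \<beta>) x"
    unfolding K_def by (intro allI impI B.part2[OF b0(1)])
  have P3: "\<forall>x::complex. norm x < 1 \<longrightarrow>
            (\<lambda>k. complex_of_real (bt k) * x ^ k) sums
              ((1 - x) powr complex_of_real \<alpha> / (1 - complex_of_real K * x * hyp2f1 1 (-\<alpha>) (1 + \<beta>) x))"
  proof (intro allI impI)
    fix x :: complex assume x: "norm x < 1"
    have e: "integral\<^sup>L M (\<lambda>\<omega>. complex_of_real (psi \<omega>) / (1 - x * complex_of_real (phi \<omega>)))
        = complex_of_real K * hyp2f1 1 (-\<alpha>) (1 + \<beta>) x"
    proof -
      have "integral\<^sup>L M (\<lambda>\<omega>. complex_of_real ((1 - phi \<omega>) powr \<beta>) / (1 - x * complex_of_real (phi \<omega>)))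
              = complex_of_real K * hyp2f1 1 (-\<alpha>) (1 + \<beta>) x" using P2 x by (elim allE impE)
      with B.psi_eq[OF meas(2) psi_int cond b0(2) x] show ?thesis by (rule trans)
    qed
    have e1: "integral\<^sup>L M (\<lambda>\<omega>. 1 / (1 - x * complex_of_real (phi \<omega>))) = (1 - x) powr complex_of_real \<alpha>"
      using P1 x by (elim allE impE)
    have e2: "x * (complex_of_real K * hyp2f1 1 (-\<alpha>) (1 + \<beta>) x) = complex_of_real K * x * hyp2f1 1 (-\<alpha>) (1 + \<beta>) x"
      by (simp only: mult_ac)
    show "(\<lambda>k. complex_of_real (bt k) * x ^ k) sums
              ((1 - x) powr complex_of_real \<alpha> / (1 - complex_of_real K * x * hyp2f1 1 (-\<alpha>) (1 + \<beta>) x))"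
      using bt[OF x] unfolding e1 e e2 .
  qed
  interpret S: specL "\<lambda>k. B.mom k \<beta>" bt \<alpha> "\<lambda>z. complex_of_real K * z * hyp2f1 1 (-\<alpha>) (1 + \<beta>) z"
  proof unfold_locales
    show "-1/2 < \<alpha>" "\<alpha> < 0" using \<alpha> by auto
    show "0 \<le> B.mom k \<beta>" for k by (rule B.mom_nonneg) (use \<alpha> \<beta> in auto)
    show "summable (\<lambda>k. B.mom k \<beta>)" "(\<Sum>k. B.mom k \<beta>) < 1" using B.momsum[OF \<beta>] by auto
    show "(\<lambda>k. complex_of_real (B.mom k \<beta>) * z ^ Suc k) sums (complex_of_real K * z * hyp2f1 1 (-\<alpha>) (1 + \<beta>) z)"
      if "norm z \<le> 1" for z
      using B.Dser_lemma[OF \<beta> that] unfolding K_def .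
    show "(\<lambda>k. complex_of_real (bt k) * z ^ k) sums
        ((1 - z) powr complex_of_real \<alpha> / (1 - complex_of_real K * z * hyp2f1 1 (-\<alpha>) (1 + \<beta>) z))"
      if "norm z < 1" for z
      using P3 that by blast
  qed
  have P4: "is_spectral_density (ma_autocov (integral\<^sup>L M c) \<sigma>2 bt)
           (\<lambda>l. (integral\<^sup>L M c)\<^sup>2 * \<sigma>2 / (2 * pi)
                * (norm (1 - exp (- \<i> * complex_of_real l)) powr (2 * \<alpha>)
                   / (norm (1 - complex_of_real K * exp (- \<i> * complex_of_real l)
                          * hyp2f1 1 (-\<alpha>) (1 + \<beta>) (exp (- \<i> * complex_of_real l))))\<^sup>2))"
    by (rule S.spectral)
  show ?thesis by (intro conjI P1 P2 P3 P4)
qed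

end
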